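(* For every local category $\mathbb{C}$, $\mathbf{R}[\mathbb{C}]$ is a restriction category.
   Context: Composition is diagrammatic. A local category is a category $\mathbb{C}$ with, for each object $M$, an object $\mathsf{L}M$ and a morphism $\eta_M:M\to\mathsf{L}M$ such that (L.1) $\mathsf{L}\mathsf{L}M=\mathsf{L}M$ and $\eta_{\mathsf{L}M}=\mathrm{id}$; (L.2) each $\eta_M$ is monic; (L.3) for every $M$ and $f:N\to\mathsf{L}M$ a pullback of $\eta_M$ along $f$ exists, with leg $m:P\to N$, such that $\mathsf{L}P=\mathsf{L}N$ and $m\eta_N=\eta_P$. An object $M$ is total if $M=\mathsf{L}M$ and $\eta_M=\mathrm{id}_M$. $\mathbf{R}[\mathbb{C}]$ has as objects the total objects of $\mathbb{C}$. A morphism $M\to N$ is an isomorphism class of pairs $(U,f)$ with $U$ an object of $\mathbb{C}$ satisfying $\mathsf{L}U=M$ and $f:U\to N$ a morphism, where $(U,f)$ and $(V,g)$ are isomorphic if there is an isomorphism $\varphi:U\to V$ with $\varphi\eta_V=\eta_U$ and $\varphi g=f$. The identity on $M$ is $(M,\mathrm{id}_M)$. The composite of $(U,f):M\to N$ and $(V,g):N\to P$ is $(W,\pi_Vg)$, where $W$ with projections $\pi_V:W\to V$ and $W\to U$ is a pullback of $\eta_V$ along $f$. The restriction of $(U,f)$ is $\overline{(U,f)}=(U,\eta_U):M\to M$. A restriction category is a category with an assignment to each $f:A\to B$ of $\bar f:A\to A$ such that: (R.1) $\bar ff=f$; (R.2) $\bar f\bar g=\bar g\bar f$ for $f:A\to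 B$, $g:A\to C$; (R.3) $\bar g\bar f=\overline{\bar gf}$ for $f:A\to B$, $g:A\to C$; (R.4) $f\bar g=\overline{fg}f$ for $f:A\to B$, $g:B\to C$. *)

theory Defs
  imports Main
begin

text \<open>Categories with diagrammatic composition: Comp f g means "first f, then g".\<close>

record ('o, 'm) cat =
  Ob   :: "'o set"
  Ar   :: "'m set"
  Dom  :: "'m \<Rightarrow> 'o"
  Cod  :: "'m \<Rightarrow> 'o"
  Id   :: "'o \<Rightarrow> 'm"
  Comp :: "'m \<Rightarrow> 'm \<Rightarrow> 'm"

definition hom :: "('o, 'm) cat \<Rightarrow> 'm \<Rightarrow> 'o \<Rightarrow> 'o \<Rightarrow> bool" where
  "hom C f A B \<longleftrightarrow> f \<in> Ar C \<and> Dom C f = A \<and> Cod C f = B"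

definition category :: "('o, 'm) cat \<Rightarrow> bool" where
  "category C \<longleftrightarrow>
     (\<forall>f \<in> Ar C. Dom C f \<in> Ob C \<and> Cod C f \<in> Ob C) \<and>
     (\<forall>A \<in> Ob C. hom C (Id C A) A A) \<and>
     (\<forall>f \<in> Ar C. \<forall>g \<in> Ar C. Cod C f = Dom C g \<longrightarrow> hom C (Comp C f g) (Dom C f) (Cod C g)) \<and>
     (\<forall>f \<in> Ar C. Comp C (Id C (Dom C f)) f = f \<and> Comp C f (Id C (Cod C f)) = f) \<and>
     (\<forall>f \<in> Ar C. \<forall>g \<in> Ar C. \<forall>h \<in> Ar C. Cod C f = Dom C g \<longrightarrow> Cod C g = Dom C h \<longrightarrow>
        Comp C (Comp C f g) h = Comp C f (Comp C g h))"

definition monic :: "('o, 'm) cat \<Rightarrow> 'm \<Rightarrow> bool" where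
  "monic C h \<longleftrightarrow> h \<in> Ar C \<and>
     (\<forall>g k. g \<in> Ar C \<longrightarrow> k \<in> Ar C \<longrightarrow> Cod C g = Dom C h \<longrightarrow> Cod C k = Dom C h \<longrightarrow>
        Dom C g = Dom C k \<longrightarrow> Comp C g h = Comp C k h \<longrightarrow> g = k)"

definition iso :: "('o, 'm) cat \<Rightarrow> 'm \<Rightarrow> bool" where
  "iso C f \<longleftrightarrow> f \<in> Ar C \<and> (\<exists>g. hom C g (Cod C f) (Dom C f) \<and>
     Comp C f g = Id C (Dom C f) \<and> Comp C g f = Id C (Cod C f))"

definition is_pullback :: "('o, 'm) cat \<Rightarrow> 'm \<Rightarrow> 'm \<Rightarrow> 'o \<Rightarrow> 'm \<Rightarrow> 'm \<Rightarrow> bool" where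
  "is_pullback C h f P p q \<longleftrightarrow>
     P \<in> Ob C \<and> hom C p P (Dom C f) \<and> hom C q P (Dom C h) \<and>
     Comp C p f = Comp C q h \<and>
     (\<forall>Q x y. Q \<in> Ob C \<longrightarrow> hom C x Q (Dom C f) \<longrightarrow> hom C y Q (Dom C h) \<longrightarrow>
        Comp C x f = Comp C y h \<longrightarrow>
        (\<exists>!u. hom C u Q P \<and> Comp C u p = x \<and> Comp C u q = y))"

definition local_category :: "('o, 'm) cat \<Rightarrow> ('o \<Rightarrow> 'o) \<Rightarrow> ('o \<Rightarrow> 'm) \<Rightarrow> bool" where
  "local_category C L \<eta> \<longleftrightarrow> category C \<and>
     (\<forall>M \<in> Ob C. L M \<in> Ob C \<and> hom C (\<eta> M) M (L M)) \<and>
     (\<forall>M \<in> Ob C. L (L M) = L M \<and> \<eta> (L M) = Id C (L M)) \<and>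
     (\<forall>M \<in> Ob C. monic C (\<eta> M)) \<and>
     (\<forall>M \<in> Ob C. \<forall>f. f \<in> Ar C \<longrightarrow> Cod C f = L M \<longrightarrow>
        (\<exists>P m m'. is_pullback C (\<eta> M) f P m m' \<and> L P = L (Dom C f) \<and>
                  Comp C m (\<eta> (Dom C f)) = \<eta> P))"

definition total :: "('o, 'm) cat \<Rightarrow> ('o \<Rightarrow> 'o) \<Rightarrow> ('o \<Rightarrow> 'm) \<Rightarrow> 'o \<Rightarrow> bool" where
  "total C L \<eta> M \<longleftrightarrow> M \<in> Ob C \<and> L M = M \<and> \<eta> M = Id C M"

text \<open>Pairs (U, f) with f : U \<rightarrow> N, N total (then L U is automatically total).\<close>
definition rpair :: "('o, 'm) cat \<Rightarrow> ('o \<Rightarrow> 'o) \<Rightarrow> ('o \<Rightarrow> 'm) \<Rightarrow> 'o \<times> 'm \<Rightarrow> bool" where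
  "rpair C L \<eta> p \<longleftrightarrow> fst p \<in> Ob C \<and> hom C (snd p) (fst p) (Cod C (snd p)) \<and>
     total C L \<eta> (Cod C (snd p))"

definition rpair_iso :: "('o, 'm) cat \<Rightarrow> ('o \<Rightarrow> 'm) \<Rightarrow> 'o \<times> 'm \<Rightarrow> 'o \<times> 'm \<Rightarrow> bool" where
  "rpair_iso C \<eta> p q \<longleftrightarrow> (\<exists>\<phi>. iso C \<phi> \<and> hom C \<phi> (fst p) (fst q) \<and>
      Comp C \<phi> (\<eta> (fst q)) = \<eta> (fst p) \<and> Comp C \<phi> (snd q) = snd p)"

definition rcls :: "('o, 'm) cat \<Rightarrow> ('o \<Rightarrow> 'o) \<Rightarrow> ('o \<Rightarrow> 'm) \<Rightarrow> 'o \<times> 'm \<Rightarrow> ('o \<times> 'm) set" where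
  "rcls C L \<eta> p = {q. rpair C L \<eta> q \<and> L (fst q) = L (fst p) \<and> rpair_iso C \<eta> q p}"

definition rrep :: "('o, 'm) cat \<Rightarrow> ('o \<Rightarrow> 'o) \<Rightarrow> ('o \<Rightarrow> 'm) \<Rightarrow> ('o \<times> 'm) set \<Rightarrow> 'o \<times> 'm" where
  "rrep C L \<eta> a = (SOME p. rpair C L \<eta> p \<and> a = rcls C L \<eta> p)"

text \<open>Composite of (U,f) and (V,g): (W, pi_V g) where W is a pullback of eta_V along f
  as provided by (L.3), i.e. with L W = L U and pi_U eta_U = eta_W.\<close>
definition R_cat :: "('o, 'm) cat \<Rightarrow> ('o \<Rightarrow> 'o) \<Rightarrow> ('o \<Rightarrow> 'm) \<Rightarrow> ('o, ('o \<times> 'm) set) cat" where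
  "R_cat C L \<eta> = \<lparr>
     Ob = {M. total C L \<eta> M},
     Ar = {rcls C L \<eta> p | p. rpair C L \<eta> p},
     Dom = (\<lambda>a. L (fst (rrep C L \<eta> a))),
     Cod = (\<lambda>a. Cod C (snd (rrep C L \<eta> a))),
     Id = (\<lambda>M. rcls C L \<eta> (M, Id C M)),
     Comp = (\<lambda>a b.
        let (U, f) = rrep C L \<eta> a; (V, g) = rrep C L \<eta> b;
            (W, pU, pV) = (SOME (W, pU, pV). is_pullback C (\<eta> V) f W pU pV \<and>
                              L W = L U \<and> Comp C pU (\<eta> U) = \<eta> W)
        in rcls C L \<eta> (W, Comp C pV g)) \<rparr>"

definition R_rst :: "('o, 'm) cat \<Rightarrow> ('o \<Rightarrow> 'o) \<Rightarrow> ('o \<Rightarrow> 'm) \<Rightarrow> ('o \<times> 'm) set \<Rightarrow> ('o \<times> 'm) set" where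
  "R_rst C L \<eta> a = (let (U, f) = rrep C L \<eta> a in rcls C L \<eta> (U, \<eta> U))"

definition restriction_category :: "('o, 'm) cat \<Rightarrow> ('m \<Rightarrow> 'm) \<Rightarrow> bool" where
  "restriction_category C rst \<longleftrightarrow> category C \<and>
     (\<forall>f \<in> Ar C. hom C (rst f) (Dom C f) (Dom C f)) \<and>
     (\<forall>f \<in> Ar C. Comp C (rst f) f = f) \<and>
     (\<forall>f \<in> Ar C. \<forall>g \<in> Ar C. Dom C f = Dom C g \<longrightarrow>
        Comp C (rst f) (rst g) = Comp C (rst g) (rst f)) \<and>
     (\<forall>f \<in> Ar C. \<forall>g \<in> Ar C. Dom C f = Dom C g \<longrightarrow>
        Comp C (rst g) (rst f) = rst (Comp C (rst g) f)) \<and>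
     (\<forall>f \<in> Ar C. \<forall>g \<in> Ar C. Cod C f = Dom C g \<longrightarrow>
        Comp C f (rst g) = Comp C (rst (Comp C f g)) f)"

end

theory Submission
  imports Defs
begin


locale lcat =
  fixes C :: "('o, 'm) cat" and L :: "'o \<Rightarrow> 'o" and \<eta> :: "'o \<Rightarrow> 'm"
  assumes lc: "local_category C L \<eta>"
begin

abbreviation cp (infixr "\<cdot>" 70) where "f \<cdot> g \<equiv> Comp C f g"

lemma cat: "category C" using lc unfolding local_category_def by (elim conjE) assumption

lemma C1: "\<forall>f \<in> Ar C. Dom C f \<in> Ob C \<and> Cod C f \<in> Ob C" using cat unfolding category_def by (elim conjE) assumption
lemma C2: "\<forall>A \<in> Ob C. hom C (Id C A) A A" using cat unfolding category_def by (elim conjE) assumption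
lemma C3: "\<forall>f \<in> Ar C. \<forall>g \<in> Ar C. Cod C f = Dom C g \<longrightarrow> hom C (Comp C f g) (Dom C f) (Cod C g)"
  using cat unfolding category_def by (elim conjE) assumption
lemma C4: "\<forall>f \<in> Ar C. Comp C (Id C (Dom C f)) f = f \<and> Comp C f (Id C (Cod C f)) = f"
  using cat unfolding category_def by (elim conjE) assumption
lemma C5: "\<forall>f \<in> Ar C. \<forall>g \<in> Ar C. \<forall>h \<in> Ar C. Cod C f = Dom C g \<longrightarrow> Cod C g = Dom C h \<longrightarrow>
        Comp C (Comp C f g) h = Comp C f (Comp C g h)"
  using cat unfolding category_def by (elim conjE) assumption

lemma dom_ob[simp]: "f \<in> Ar C \<Longrightarrow> Dom C f \<in> Ob C" using C1 by blast
lemma cod_ob[simp]: "f \<in> Ar C \<Longrightarrow> Cod C f \<in> Ob C" using C1 by blast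
lemma id_arr[simp]: "A \<in> Ob C \<Longrightarrow> Id C A \<in> Ar C" using C2 unfolding hom_def by blast
lemma id_dom[simp]: "A \<in> Ob C \<Longrightarrow> Dom C (Id C A) = A" using C2 unfolding hom_def by blast
lemma id_cod[simp]: "A \<in> Ob C \<Longrightarrow> Cod C (Id C A) = A" using C2 unfolding hom_def by blast
lemma comp_arr[simp]: "f \<in> Ar C \<Longrightarrow> g \<in> Ar C \<Longrightarrow> Cod C f = Dom C g \<Longrightarrow> f \<cdot> g \<in> Ar C"
  using C3 unfolding hom_def by blast
lemma comp_dom[simp]: "f \<in> Ar C \<Longrightarrow> g \<in> Ar C \<Longrightarrow> Cod C f = Dom C g \<Longrightarrow> Dom C (f \<cdot> g) = Dom C f"
  using C3 unfolding hom_def by blast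
lemma comp_cod[simp]: "f \<in> Ar C \<Longrightarrow> g \<in> Ar C \<Longrightarrow> Cod C f = Dom C g \<Longrightarrow> Cod C (f \<cdot> g) = Cod C g"
  using C3 unfolding hom_def by blast
lemma id_l[simp]: "f \<in> Ar C \<Longrightarrow> Dom C f = A \<Longrightarrow> Id C A \<cdot> f = f"
  using C4 by blast
lemma id_r[simp]: "f \<in> Ar C \<Longrightarrow> Cod C f = A \<Longrightarrow> f \<cdot> Id C A = f"
  using C4 by blast
lemma assoc[simp]: "f \<in> Ar C \<Longrightarrow> g \<in> Ar C \<Longrightarrow> h \<in> Ar C \<Longrightarrow> Cod C f = Dom C g \<Longrightarrow> Cod C g = Dom C h
  \<Longrightarrow> (f \<cdot> g) \<cdot> h = f \<cdot> (g \<cdot> h)"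
  using C5 by blast

lemma LC2: "\<forall>M \<in> Ob C. L M \<in> Ob C \<and> hom C (\<eta> M) M (L M)" using lc unfolding local_category_def by (elim conjE) assumption
lemma LC3: "\<forall>M \<in> Ob C. L (L M) = L M \<and> \<eta> (L M) = Id C (L M)" using lc unfolding local_category_def by (elim conjE) assumption
lemma LC4: "\<forall>M \<in> Ob C. monic C (\<eta> M)" using lc unfolding local_category_def by (elim conjE) assumption
lemma LC5: "\<forall>M \<in> Ob C. \<forall>f. f \<in> Ar C \<longrightarrow> Cod C f = L M \<longrightarrow>
        (\<exists>P m m'. is_pullback C (\<eta> M) f P m m' \<and> L P = L (Dom C f) \<and>
                  Comp C m (\<eta> (Dom C f)) = \<eta> P)" using lc unfolding local_category_def by (elim conjE) assumption

lemma eta_arr[simp]: "M \<in> Ob C \<Longrightarrow> \<eta> M \<in> Ar C" using LC2 unfolding hom_def by blast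
lemma eta_dom[simp]: "M \<in> Ob C \<Longrightarrow> Dom C (\<eta> M) = M" using LC2 unfolding hom_def by blast
lemma eta_cod[simp]: "M \<in> Ob C \<Longrightarrow> Cod C (\<eta> M) = L M" using LC2 unfolding hom_def by blast
lemma L_ob[simp]: "M \<in> Ob C \<Longrightarrow> L M \<in> Ob C" using LC2 by blast
lemma LL[simp]: "M \<in> Ob C \<Longrightarrow> L (L M) = L M" using LC3 by blast
lemma eta_L[simp]: "M \<in> Ob C \<Longrightarrow> \<eta> (L M) = Id C (L M)" using LC3 by blast
lemma eta_monic: "M \<in> Ob C \<Longrightarrow> g \<in> Ar C \<Longrightarrow> k \<in> Ar C \<Longrightarrow> Cod C g = M \<Longrightarrow> Cod C k = M \<Longrightarrow>
   Dom C g = Dom C k \<Longrightarrow> g \<cdot> \<eta> M = k \<cdot> \<eta> M \<Longrightarrow> g = k"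
  using LC4 unfolding monic_def by auto
lemma L3: "M \<in> Ob C \<Longrightarrow> f \<in> Ar C \<Longrightarrow> Cod C f = L M \<Longrightarrow>
   \<exists>P m m'. is_pullback C (\<eta> M) f P m m' \<and> L P = L (Dom C f) \<and> m \<cdot> \<eta> (Dom C f) = \<eta> P"
  using LC5 by blast

lemma pb_sym: "is_pullback C h f P p q \<Longrightarrow> is_pullback C f h P q p"
  unfolding is_pullback_def by (smt (verit))

lemma pb_parts: "is_pullback C h f P p q \<Longrightarrow> P \<in> Ob C \<and> p \<in> Ar C \<and> Dom C p = P \<and> Cod C p = Dom C f \<and>
   q \<in> Ar C \<and> Dom C q = P \<and> Cod C q = Dom C h \<and> p \<cdot> f = q \<cdot> h"
  unfolding is_pullback_def hom_def by blast

lemma pb_ex: "is_pullback C h f P p q \<Longrightarrow> x \<in> Ar C \<Longrightarrow> y \<in> Ar C \<Longrightarrow> Dom C x = Dom C y \<Longrightarrow>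
   Cod C x = Dom C f \<Longrightarrow> Cod C y = Dom C h \<Longrightarrow> x \<cdot> f = y \<cdot> h \<Longrightarrow>
   \<exists>u. u \<in> Ar C \<and> Dom C u = Dom C x \<and> Cod C u = P \<and> u \<cdot> p = x \<and> u \<cdot> q = y"
  unfolding is_pullback_def hom_def
  apply (elim conjE)
  apply (drule spec[of _ "Dom C x"], drule spec[of _ x], drule spec[of _ y])
  by auto

lemma pb_uniq:
  assumes pb: "is_pullback C h f P p q" and "f \<in> Ar C" "h \<in> Ar C" "u \<in> Ar C" "v \<in> Ar C"
    "Dom C u = Dom C v" "Cod C u = P" "Cod C v = P" "u \<cdot> p = v \<cdot> p" "u \<cdot> q = v \<cdot> q"
  shows "u = v"
proof -
  note pp = pb_parts[OF pb]
  have sq: "(u \<cdot> p) \<cdot> f = (u \<cdot> q) \<cdot> h" using pp assms by simp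
  have "\<exists>!w. hom C w (Dom C u) P \<and> w \<cdot> p = u \<cdot> p \<and> w \<cdot> q = u \<cdot> q"
    using pb sq assms pp unfolding is_pullback_def hom_def by simp
  then show ?thesis using assms unfolding hom_def by metis
qed

lemma pb_intro:
  assumes "P \<in> Ob C" "p \<in> Ar C" "Dom C p = P" "Cod C p = Dom C f" "q \<in> Ar C" "Dom C q = P"
    "Cod C q = Dom C h" "p \<cdot> f = q \<cdot> h"
  and ex: "\<And>x y. x \<in> Ar C \<Longrightarrow> y \<in> Ar C \<Longrightarrow> Dom C x = Dom C y \<Longrightarrow> Cod C x = Dom C f \<Longrightarrow>
     Cod C y = Dom C h \<Longrightarrow> x \<cdot> f = y \<cdot> h \<Longrightarrow>
     \<exists>u. u \<in> Ar C \<and> Dom C u = Dom C x \<and> Cod C u = P \<and> u \<cdot> p = x \<and> u \<cdot> q = y"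
  and un: "\<And>u v. u \<in> Ar C \<Longrightarrow> v \<in> Ar C \<Longrightarrow> Dom C u = Dom C v \<Longrightarrow> Cod C u = P \<Longrightarrow> Cod C v = P \<Longrightarrow>
     u \<cdot> p = v \<cdot> p \<Longrightarrow> u \<cdot> q = v \<cdot> q \<Longrightarrow> u = v"
  shows "is_pullback C h f P p q"
  unfolding is_pullback_def hom_def
proof (intro conjI allI impI)
  fix Q x y
  assume a: "Q \<in> Ob C" "x \<in> Ar C \<and> Dom C x = Q \<and> Cod C x = Dom C f"
    "y \<in> Ar C \<and> Dom C y = Q \<and> Cod C y = Dom C h" "x \<cdot> f = y \<cdot> h"
  then obtain u where u: "u \<in> Ar C \<and> Dom C u = Dom C x \<and> Cod C u = P \<and> u \<cdot> p = x \<and> u \<cdot> q = y"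
    using ex by metis
  show "\<exists>!u. (u \<in> Ar C \<and> Dom C u = Q \<and> Cod C u = P) \<and> u \<cdot> p = x \<and> u \<cdot> q = y"
    apply (rule ex1I[of _ u])
    using u a apply simp
    using u a un by metis
qed (use assms in auto)

lemma iso_inv: "iso C \<phi> \<Longrightarrow> \<exists>\<psi>. \<psi> \<in> Ar C \<and> Dom C \<psi> = Cod C \<phi> \<and> Cod C \<psi> = Dom C \<phi> \<and>
   \<phi> \<cdot> \<psi> = Id C (Dom C \<phi>) \<and> \<psi> \<cdot> \<phi> = Id C (Cod C \<phi>)"
  unfolding iso_def hom_def by blast
lemma iso_arr: "iso C \<phi> \<Longrightarrow> \<phi> \<in> Ar C" unfolding iso_def by blast
lemma isoI: "\<phi> \<in> Ar C \<Longrightarrow> \<psi> \<in> Ar C \<Longrightarrow> Dom C \<psi> = Cod C \<phi> \<Longrightarrow> Cod C \<psi> = Dom C \<phi> \<Longrightarrow>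
   \<phi> \<cdot> \<psi> = Id C (Dom C \<phi>) \<Longrightarrow> \<psi> \<cdot> \<phi> = Id C (Cod C \<phi>) \<Longrightarrow> iso C \<phi>"
  unfolding iso_def hom_def by blast
lemma iso_id: "A \<in> Ob C \<Longrightarrow> iso C (Id C A)"
  by (rule isoI[of _ "Id C A"]) auto

lemma cancel:
  assumes "a \<cdot> b = Id C (Dom C a)" "a \<in> Ar C" "b \<in> Ar C" "c \<in> Ar C" "Cod C a = Dom C b"
    "Cod C b = Dom C c" "Cod C b = Dom C a"
  shows "a \<cdot> (b \<cdot> c) = c"
proof -
  have "(a \<cdot> b) \<cdot> c = a \<cdot> (b \<cdot> c)" by (rule assoc) (use assms in auto)
  moreover have "(a \<cdot> b) \<cdot> c = c" using assms by (simp del: assoc)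
  ultimately show ?thesis by simp
qed

lemma iso_comp:
  assumes "iso C \<phi>" "iso C \<chi>" "Cod C \<phi> = Dom C \<chi>"
  shows "iso C (\<phi> \<cdot> \<chi>)"
proof -
  obtain \<psi> where p: "\<psi> \<in> Ar C \<and> Dom C \<psi> = Cod C \<phi> \<and> Cod C \<psi> = Dom C \<phi> \<and>
   \<phi> \<cdot> \<psi> = Id C (Dom C \<phi>) \<and> \<psi> \<cdot> \<phi> = Id C (Cod C \<phi>)" using iso_inv[OF assms(1)] by blast
  obtain \<omega> where w: "\<omega> \<in> Ar C \<and> Dom C \<omega> = Cod C \<chi> \<and> Cod C \<omega> = Dom C \<chi> \<and>
   \<chi> \<cdot> \<omega> = Id C (Dom C \<chi>) \<and> \<omega> \<cdot> \<chi> = Id C (Cod C \<chi>)"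
    using iso_inv[OF assms(2)] by blast
  have a: "\<phi> \<in> Ar C" "\<chi> \<in> Ar C" using assms iso_arr by auto
  have "(\<phi> \<cdot> \<chi>) \<cdot> (\<omega> \<cdot> \<psi>) = \<phi> \<cdot> (\<chi> \<cdot> (\<omega> \<cdot> \<psi>))" using a p w assms by simp
  also have "\<chi> \<cdot> (\<omega> \<cdot> \<psi>) = \<psi>" by (rule cancel) (use a p w assms in auto)
  finally have 1: "(\<phi> \<cdot> \<chi>) \<cdot> (\<omega> \<cdot> \<psi>) = Id C (Dom C (\<phi> \<cdot> \<chi>))" using a p w assms by simp
  have "(\<omega> \<cdot> \<psi>) \<cdot> (\<phi> \<cdot> \<chi>) = \<omega> \<cdot> (\<psi> \<cdot> (\<phi> \<cdot> \<chi>))" using a p w assms by simp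
  also have "\<psi> \<cdot> (\<phi> \<cdot> \<chi>) = \<chi>" by (rule cancel) (use a p w assms in auto)
  finally have 2: "(\<omega> \<cdot> \<psi>) \<cdot> (\<phi> \<cdot> \<chi>) = Id C (Cod C (\<phi> \<cdot> \<chi>))" using a p w assms by simp
  show ?thesis by (rule isoI[OF _ _ _ _ 1 2]) (use a p w assms in auto)
qed

end

context lcat begin

lemma pb_transport:
  assumes pb: "is_pullback C h f P p q" and f: "f \<in> Ar C" and h: "h \<in> Ar C"
  and \<phi>: "iso C \<phi>" "Dom C \<phi> = Dom C f" and f0: "f0 \<in> Ar C" "Dom C f0 = Cod C \<phi>" and e: "\<phi> \<cdot> f0 = f"
  shows "is_pullback C h f0 P (p \<cdot> \<phi>) q"
proof -
  note pp = pb_parts[OF pb]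
  have pa: "\<phi> \<in> Ar C" using \<phi> iso_arr by auto
  obtain \<psi> where \<psi>: "\<psi> \<in> Ar C" "Dom C \<psi> = Cod C \<phi>" "Cod C \<psi> = Dom C \<phi>"
     "\<phi> \<cdot> \<psi> = Id C (Dom C \<phi>)" "\<psi> \<cdot> \<phi> = Id C (Cod C \<phi>)"
    using iso_inv[OF \<phi>(1)] by blast
  have cf: "Cod C \<phi> = Dom C f0" "Cod C f0 = Cod C f" using f0 e pa f by auto
  show ?thesis
  proof (rule pb_intro)
    show "(p \<cdot> \<phi>) \<cdot> f0 = q \<cdot> h" using pp pa \<phi> f0 e by simp
  next
    fix x y
    assume a: "x \<in> Ar C" "y \<in> Ar C" "Dom C x = Dom C y" "Cod C x = Dom C f0" "Cod C y = Dom C h"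
      "x \<cdot> f0 = y \<cdot> h"
    have c1: "\<psi> \<cdot> (\<phi> \<cdot> f0) = f0" by (rule cancel) (use \<psi> pa f0 in auto)
    have "(x \<cdot> \<psi>) \<cdot> f = x \<cdot> (\<psi> \<cdot> (\<phi> \<cdot> f0))" using a \<psi> pa f0 e f \<phi> by simp
    also have "\<dots> = y \<cdot> h" using c1 a by simp
    finally have sq: "(x \<cdot> \<psi>) \<cdot> f = y \<cdot> h" .
    obtain u where u: "u \<in> Ar C" "Dom C u = Dom C (x \<cdot> \<psi>)" "Cod C u = P" "u \<cdot> p = x \<cdot> \<psi>" "u \<cdot> q = y"
      using pb_ex[OF pb, of "x \<cdot> \<psi>" y] a \<psi> sq cf \<phi> by auto
    have "u \<cdot> (p \<cdot> \<phi>) = (u \<cdot> p) \<cdot> \<phi>" by (rule assoc[symmetric]) (use u pp pa \<phi> in auto)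
    also have "\<dots> = x" using u a \<psi> pa cf by simp
    finally show "\<exists>u. u \<in> Ar C \<and> Dom C u = Dom C x \<and> Cod C u = P \<and> u \<cdot> (p \<cdot> \<phi>) = x \<and> u \<cdot> q = y"
      using u a \<psi> cf by auto
  next
    fix u v
    assume a: "u \<in> Ar C" "v \<in> Ar C" "Dom C u = Dom C v" "Cod C u = P" "Cod C v = P"
      "u \<cdot> (p \<cdot> \<phi>) = v \<cdot> (p \<cdot> \<phi>)" "u \<cdot> q = v \<cdot> q"
    have "u \<cdot> p = (u \<cdot> (p \<cdot> \<phi>)) \<cdot> \<psi>" using a(1-5) pp \<psi> pa \<phi> by simp
    also have "\<dots> = (v \<cdot> (p \<cdot> \<phi>)) \<cdot> \<psi>" using a by simp
    also have "\<dots> = v \<cdot> p" using a(1-5) pp \<psi> pa \<phi> by simp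
    finally show "u = v" using pb_uniq[OF pb f h] a pp by blast
  qed (use pp pa \<phi> f0 cf in auto)
qed

lemma pb_iso:
  assumes pb1: "is_pullback C h f P p q" and pb2: "is_pullback C h f P' p' q'" and fh: "f \<in> Ar C" "h \<in> Ar C"
  shows "\<exists>\<theta>. iso C \<theta> \<and> \<theta> \<in> Ar C \<and> Dom C \<theta> = P \<and> Cod C \<theta> = P' \<and> \<theta> \<cdot> p' = p \<and> \<theta> \<cdot> q' = q"
proof -
  note p1 = pb_parts[OF pb1] and p2 = pb_parts[OF pb2]
  obtain \<theta> where t: "\<theta> \<in> Ar C" "Dom C \<theta> = P" "Cod C \<theta> = P'" "\<theta> \<cdot> p' = p" "\<theta> \<cdot> q' = q"
    using pb_ex[OF pb2, of p q] p1 by auto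
  obtain \<kappa> where k: "\<kappa> \<in> Ar C" "Dom C \<kappa> = P'" "Cod C \<kappa> = P" "\<kappa> \<cdot> p = p'" "\<kappa> \<cdot> q = q'"
    using pb_ex[OF pb1, of p' q'] p2 by auto
  have 1: "\<theta> \<cdot> \<kappa> = Id C P"
    by (rule pb_uniq[OF pb1 fh]) (use t k p1 in simp_all)
  have 2: "\<kappa> \<cdot> \<theta> = Id C P'"
    by (rule pb_uniq[OF pb2 fh]) (use t k p2 in simp_all)
  have "iso C \<theta>" by (rule isoI[of _ \<kappa>]) (use t k 1 2 in auto)
  then show ?thesis using t by blast
qed

end

context lcat begin

abbreviation rp where "rp p \<equiv> rpair C L \<eta> p"
abbreviation ri where "ri p q \<equiv> rpair_iso C \<eta> p q"
abbreviation cl where "cl p \<equiv> rcls C L \<eta> p"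
abbreviation RR where "RR \<equiv> R_cat C L \<eta>"

lemma rp_iff: "rp (U,f) \<longleftrightarrow> f \<in> Ar C \<and> Dom C f = U \<and> L (Cod C f) = Cod C f \<and> \<eta> (Cod C f) = Id C (Cod C f)"
  unfolding rpair_def total_def hom_def by auto

lemma ri_iff: "ri (U,f) (V,g) \<longleftrightarrow> (\<exists>\<phi>. iso C \<phi> \<and> \<phi> \<in> Ar C \<and> Dom C \<phi> = U \<and> Cod C \<phi> = V \<and> \<phi> \<cdot> \<eta> V = \<eta> U \<and> \<phi> \<cdot> g = f)"
  unfolding rpair_iso_def hom_def by auto

lemma ri_refl: "rp (U,f) \<Longrightarrow> ri (U,f) (U,f)"
  unfolding rp_iff ri_iff using iso_id by (intro exI[of _ "Id C U"]) auto

lemma ri_sym: assumes "rp (U,f)" "rp (V,g)" "ri (U,f) (V,g)" shows "ri (V,g) (U,f)"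
proof -
  obtain \<phi> where \<phi>: "iso C \<phi>" "\<phi> \<in> Ar C" "Dom C \<phi> = U" "Cod C \<phi> = V" "\<phi> \<cdot> \<eta> V = \<eta> U" "\<phi> \<cdot> g = f"
    using assms(3) unfolding ri_iff by blast
  obtain \<psi> where \<psi>: "\<psi> \<in> Ar C" "Dom C \<psi> = V" "Cod C \<psi> = U" "\<phi> \<cdot> \<psi> = Id C U" "\<psi> \<cdot> \<phi> = Id C V"
    using iso_inv[OF \<phi>(1)] \<phi> by auto
  have U: "U \<in> Ob C" "V \<in> Ob C" using assms(1,2) unfolding rp_iff by auto
  have g: "g \<in> Ar C" "Dom C g = V" using assms(2) unfolding rp_iff by auto
  have "\<psi> \<cdot> \<eta> U = \<psi> \<cdot> (\<phi> \<cdot> \<eta> V)" using \<phi> by simp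
  also have "\<dots> = \<eta> V" by (rule cancel) (use \<psi> \<phi> U in auto)
  finally have 1: "\<psi> \<cdot> \<eta> U = \<eta> V" .
  have "\<psi> \<cdot> f = \<psi> \<cdot> (\<phi> \<cdot> g)" using \<phi> by simp
  also have "\<dots> = g" by (rule cancel) (use \<psi> \<phi> g in auto)
  finally have 2: "\<psi> \<cdot> f = g" .
  have "iso C \<psi>" by (rule isoI[of _ \<phi>]) (use \<psi> \<phi> in auto)
  then show ?thesis unfolding ri_iff using \<psi> 1 2 by blast
qed

lemma ri_trans: assumes "rp (U,f)" "rp (V,g)" "rp (X,h)" "ri (U,f) (V,g)" "ri (V,g) (X,h)"
  shows "ri (U,f) (X,h)"
proof -
  obtain \<phi> where \<phi>: "iso C \<phi>" "\<phi> \<in> Ar C" "Dom C \<phi> = U" "Cod C \<phi> = V" "\<phi> \<cdot> \<eta> V = \<eta> U" "\<phi> \<cdot> g = f"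
    using assms(4) unfolding ri_iff by blast
  obtain \<chi> where \<chi>: "iso C \<chi>" "\<chi> \<in> Ar C" "Dom C \<chi> = V" "Cod C \<chi> = X" "\<chi> \<cdot> \<eta> X = \<eta> V" "\<chi> \<cdot> h = g"
    using assms(5) unfolding ri_iff by blast
  have U: "U \<in> Ob C" "V \<in> Ob C" "X \<in> Ob C" "h \<in> Ar C" "Dom C h = X" using assms(1,2,3) unfolding rp_iff by auto
  have "iso C (\<phi> \<cdot> \<chi>)" using iso_comp \<phi> \<chi> by auto
  moreover have "(\<phi> \<cdot> \<chi>) \<cdot> \<eta> X = \<eta> U" using \<phi> \<chi> U by simp
  moreover have "(\<phi> \<cdot> \<chi>) \<cdot> h = f" using \<phi> \<chi> U by simp
  ultimately show ?thesis unfolding ri_iff using \<phi> \<chi> by (intro exI[of _ "\<phi> \<cdot> \<chi>"]) auto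
qed

lemma ri_L: assumes "rp (U,f)" "rp (V,g)" "ri (U,f) (V,g)" shows "L U = L V"
proof -
  obtain \<phi> where \<phi>: "iso C \<phi>" "\<phi> \<in> Ar C" "Dom C \<phi> = U" "Cod C \<phi> = V" "\<phi> \<cdot> \<eta> V = \<eta> U" "\<phi> \<cdot> g = f"
    using assms(3) unfolding ri_iff by blast
  have U: "U \<in> Ob C" "V \<in> Ob C" using assms(1,2) unfolding rp_iff by auto
  have "Cod C (\<phi> \<cdot> \<eta> V) = L V" using \<phi>(2,4) U by simp
  moreover have "Cod C (\<phi> \<cdot> \<eta> V) = L U" using \<phi> U by simp
  ultimately show ?thesis by simp
qed

lemma ri_cod: assumes "rp (U,f)" "rp (V,g)" "ri (U,f) (V,g)" shows "Cod C f = Cod C g"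
proof -
  obtain \<phi> where \<phi>: "iso C \<phi>" "\<phi> \<in> Ar C" "Dom C \<phi> = U" "Cod C \<phi> = V" "\<phi> \<cdot> \<eta> V = \<eta> U" "\<phi> \<cdot> g = f"
    using assms(3) unfolding ri_iff by blast
  have g: "g \<in> Ar C" "Dom C g = V" using assms(2) unfolding rp_iff by auto
  show ?thesis using \<phi> g by (metis comp_cod)
qed

lemma rcls_eq: assumes "rp (U,f)" "rp (V,g)" "ri (U,f) (V,g)" shows "cl (U,f) = cl (V,g)"
proof (rule set_eqI)
  fix q :: "'o \<times> 'm"
  obtain X h where q: "q = (X,h)" by (cases q)
  have LL: "L U = L V" using ri_L assms by blast
  have "ri (X,h) (U,f) \<longleftrightarrow> ri (X,h) (V,g)" if "rp (X,h)"
    using ri_trans ri_sym assms that by meson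
  then show "q \<in> cl (U,f) \<longleftrightarrow> q \<in> cl (V,g)" unfolding rcls_def q using LL by auto
qed

lemma mem_self: "rp (U,f) \<Longrightarrow> (U,f) \<in> cl (U,f)"
  unfolding rcls_def using ri_refl by auto

lemma rrep_ex: assumes "rp (U,f)"
  shows "\<exists>U0 f0. rrep C L \<eta> (cl (U,f)) = (U0,f0) \<and> rp (U0,f0) \<and> ri (U0,f0) (U,f) \<and> cl (U0,f0) = cl (U,f)"
proof -
  let ?r = "rrep C L \<eta> (cl (U,f))"
  have "rp ?r \<and> cl (U,f) = cl ?r"
    unfolding rrep_def by (rule someI[of _ "(U,f)"]) (use assms in auto)
  moreover obtain U0 f0 where r: "?r = (U0,f0)" by (cases ?r)
  ultimately have a: "rp (U0,f0)" "cl (U,f) = cl (U0,f0)" by auto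
  have "(U0,f0) \<in> cl (U,f)" using a mem_self by auto
  then have "ri (U0,f0) (U,f)" unfolding rcls_def by auto
  then show ?thesis using a r by auto
qed

lemma R_Dom: "rp (U,f) \<Longrightarrow> Dom RR (cl (U,f)) = L U"
  using rrep_ex[of U f] ri_L unfolding R_cat_def by fastforce

lemma R_Cod: "rp (U,f) \<Longrightarrow> Cod RR (cl (U,f)) = Cod C f"
  using rrep_ex[of U f] ri_cod unfolding R_cat_def by fastforce

lemma R_arr: "rp (U,f) \<Longrightarrow> cl (U,f) \<in> Ar RR"
  unfolding R_cat_def by auto

lemma R_Ar_cases: "a \<in> Ar RR \<Longrightarrow> \<exists>U f. rp (U,f) \<and> a = cl (U,f)"
  unfolding R_cat_def by auto

lemma R_Id: "Id RR M = cl (M, Id C M)" unfolding R_cat_def by simp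
lemma R_Ob: "M \<in> Ob RR \<longleftrightarrow> total C L \<eta> M" unfolding R_cat_def by simp

lemma rp_eta: "U \<in> Ob C \<Longrightarrow> rp (U, \<eta> U)" unfolding rp_iff by simp

lemma rp_dom: "rp (U,f) \<Longrightarrow> U \<in> Ob C \<and> f \<in> Ar C \<and> Dom C f = U"
  unfolding rp_iff by auto

lemma R_rst: assumes "rp (U,f)" shows "R_rst C L \<eta> (cl (U,f)) = cl (U, \<eta> U)"
proof -
  obtain U0 f0 where r: "rrep C L \<eta> (cl (U,f)) = (U0,f0)" "rp (U0,f0)" "ri (U0,f0) (U,f)"
    using rrep_ex[OF assms] by blast
  obtain \<phi> where \<phi>: "iso C \<phi>" "\<phi> \<in> Ar C" "Dom C \<phi> = U0" "Cod C \<phi> = U" "\<phi> \<cdot> \<eta> U = \<eta> U0" "\<phi> \<cdot> f = f0"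
    using r(3) unfolding ri_iff by blast
  have U: "U \<in> Ob C" "U0 \<in> Ob C" using assms r(2) unfolding rp_iff by auto
  have "ri (U0, \<eta> U0) (U, \<eta> U)" unfolding ri_iff using \<phi> by blast
  then have "cl (U0, \<eta> U0) = cl (U, \<eta> U)" using rcls_eq rp_eta U by blast
  then show ?thesis unfolding R_rst_def r(1) by simp
qed

end

context lcat begin

definition good where
  "good U f V W pU pV \<longleftrightarrow> is_pullback C (\<eta> V) f W pU pV \<and> L W = L U \<and> pU \<cdot> \<eta> U = \<eta> W"

lemma good_ex: assumes "rp (U,f)" "V \<in> Ob C" "Cod C f = L V" shows "\<exists>W pU pV. good U f V W pU pV"
  using L3[OF assms(2) _ assms(3)] rp_dom[OF assms(1)] unfolding good_def by auto

lemma good_parts: assumes "good U f V W pU pV" "rp (U,f)" "V \<in> Ob C"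
  shows "W \<in> Ob C \<and> pU \<in> Ar C \<and> Dom C pU = W \<and> Cod C pU = U \<and> pV \<in> Ar C \<and> Dom C pV = W \<and>
    Cod C pV = V \<and> pU \<cdot> f = pV \<cdot> \<eta> V \<and> L W = L U \<and> pU \<cdot> \<eta> U = \<eta> W"
  using pb_parts[of "\<eta> V" f W pU pV] assms rp_dom[OF assms(2)] unfolding good_def by auto

lemma rp_comp: assumes "good U f V W pU pV" "rp (U,f)" "rp (V,g)" shows "rp (W, pV \<cdot> g)"
proof -
  have v: "V \<in> Ob C" using rp_dom assms(3) by blast
  show ?thesis using good_parts[OF assms(1,2) v] assms(3) unfolding rp_iff by auto
qed

lemma R_comp:
  assumes pu: "rp (U,f)" and pv: "rp (V,g)" and c: "Cod C f = L V" and gd: "good U f V W pU pV"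
  shows "Comp RR (cl (U,f)) (cl (V,g)) = cl (W, pV \<cdot> g)"
proof -
  obtain U0 f0 where r1: "rrep C L \<eta> (cl (U,f)) = (U0,f0)" "rp (U0,f0)" "ri (U0,f0) (U,f)"
    using rrep_ex[OF pu] by blast
  obtain V0 g0 where r2: "rrep C L \<eta> (cl (V,g)) = (V0,g0)" "rp (V0,g0)" "ri (V0,g0) (V,g)"
    using rrep_ex[OF pv] by blast
  have ri1: "ri (U,f) (U0,f0)" using ri_sym[OF r1(2) pu r1(3)] .
  have ri2: "ri (V,g) (V0,g0)" using ri_sym[OF r2(2) pv r2(3)] .
  obtain \<phi> where \<phi>: "iso C \<phi>" "\<phi> \<in> Ar C" "Dom C \<phi> = U" "Cod C \<phi> = U0" "\<phi> \<cdot> \<eta> U0 = \<eta> U" "\<phi> \<cdot> f0 = f"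
    using ri1 unfolding ri_iff by blast
  obtain \<psi> where \<psi>: "iso C \<psi>" "\<psi> \<in> Ar C" "Dom C \<psi> = V" "Cod C \<psi> = V0" "\<psi> \<cdot> \<eta> V0 = \<eta> V" "\<psi> \<cdot> g0 = g"
    using ri2 unfolding ri_iff by blast
  have o: "U \<in> Ob C" "f \<in> Ar C" "Dom C f = U" "U0 \<in> Ob C" "f0 \<in> Ar C" "Dom C f0 = U0"
    "V \<in> Ob C" "g \<in> Ar C" "Dom C g = V" "V0 \<in> Ob C" "g0 \<in> Ar C" "Dom C g0 = V0"
    using rp_dom pu pv r1(2) r2(2) by auto
  have c0: "Cod C f0 = L V0" using ri_cod[OF r1(2) pu r1(3)] ri_L[OF pv r2(2) ri2] c by simp
  have "\<exists>W pU pV. good U0 f0 V0 W pU pV" using good_ex[OF r1(2) o(10) c0] .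
  then have "\<exists>x. (\<lambda>(W, pU, pV). is_pullback C (\<eta> V0) f0 W pU pV \<and> L W = L U0 \<and> pU \<cdot> \<eta> U0 = \<eta> W) x"
    unfolding good_def by auto
  then have sx: "(\<lambda>(W, pU, pV). is_pullback C (\<eta> V0) f0 W pU pV \<and> L W = L U0 \<and> pU \<cdot> \<eta> U0 = \<eta> W)
     (SOME (W, pU, pV). is_pullback C (\<eta> V0) f0 W pU pV \<and> L W = L U0 \<and> pU \<cdot> \<eta> U0 = \<eta> W)"
    by (rule someI_ex)
  obtain W0 pU0 pV0 where s: "(SOME (W, pU, pV). is_pullback C (\<eta> V0) f0 W pU pV \<and> L W = L U0 \<and> pU \<cdot> \<eta> U0 = \<eta> W)
     = (W0, pU0, pV0)" by (rule prod_cases3)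
  have g0d: "good U0 f0 V0 W0 pU0 pV0" using sx unfolding s good_def by simp
  have comp: "Comp RR (cl (U,f)) (cl (V,g)) = cl (W0, pV0 \<cdot> g0)"
    unfolding R_cat_def using r1(1) r2(1) s by simp
  have pb: "is_pullback C (\<eta> V) f W pU pV" using gd unfolding good_def by blast
  have pb1: "is_pullback C (\<eta> V) f0 W (pU \<cdot> \<phi>) pV"
    by (rule pb_transport[OF pb]) (use o \<phi> in auto)
  have pb3: "is_pullback C f0 (\<eta> V0) W (pV \<cdot> \<psi>) (pU \<cdot> \<phi>)"
    by (rule pb_transport[OF pb_sym[OF pb1]]) (use o \<psi> in auto)
  have pb0: "is_pullback C (\<eta> V0) f0 W0 pU0 pV0" using g0d unfolding good_def by blast
  obtain \<theta> where \<theta>: "iso C \<theta>" "\<theta> \<in> Ar C" "Dom C \<theta> = W" "Cod C \<theta> = W0" "\<theta> \<cdot> pU0 = pU \<cdot> \<phi>" "\<theta> \<cdot> pV0 = pV \<cdot> \<psi>"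
    using pb_iso[OF pb_sym[OF pb3] pb0] o by auto
  note gp = good_parts[OF gd pu o(7)]
  note gp0 = good_parts[OF g0d r1(2) o(10)]
  have e1: "\<theta> \<cdot> \<eta> W0 = \<eta> W"
  proof -
    have "\<theta> \<cdot> \<eta> W0 = \<theta> \<cdot> (pU0 \<cdot> \<eta> U0)" using gp0 by simp
    also have "\<dots> = (\<theta> \<cdot> pU0) \<cdot> \<eta> U0" by (rule assoc[symmetric]) (use gp0 \<theta> o in auto)
    also have "\<dots> = \<eta> W" using \<theta> gp \<phi> o by simp
    finally show ?thesis .
  qed
  have e2: "\<theta> \<cdot> (pV0 \<cdot> g0) = pV \<cdot> g"
  proof -
    have "\<theta> \<cdot> (pV0 \<cdot> g0) = (\<theta> \<cdot> pV0) \<cdot> g0" by (rule assoc[symmetric]) (use gp0 \<theta> o in auto)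
    also have "\<dots> = pV \<cdot> g" using \<theta> gp \<psi> o by simp
    finally show ?thesis .
  qed
  have "ri (W, pV \<cdot> g) (W0, pV0 \<cdot> g0)" unfolding ri_iff using \<theta> e1 e2 by blast
  then have "cl (W, pV \<cdot> g) = cl (W0, pV0 \<cdot> g0)"
    using rcls_eq rp_comp[OF gd pu pv] rp_comp[OF g0d r1(2) r2(2)] by blast
  then show ?thesis using comp by simp
qed

end

context lcat begin

lemma asc: "x \<in> Ar C \<Longrightarrow> y \<in> Ar C \<Longrightarrow> z \<in> Ar C \<Longrightarrow> Cod C x = Dom C y \<Longrightarrow> Cod C y = Dom C z \<Longrightarrow>
  x \<cdot> (y \<cdot> z) = (x \<cdot> y) \<cdot> z" by simp

lemma rp_L: "rp (U,f) \<Longrightarrow> total C L \<eta> (L U)"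
  using rp_dom unfolding total_def by auto

lemma rp_cod: "rp (U,f) \<Longrightarrow> total C L \<eta> (Cod C f)"
  unfolding rp_iff total_def by auto

lemma rp_id: "total C L \<eta> M \<Longrightarrow> rp (M, Id C M)"
  unfolding rp_iff total_def by auto

lemma RC1: "a \<in> Ar RR \<Longrightarrow> Dom RR a \<in> Ob RR \<and> Cod RR a \<in> Ob RR"
  using R_Ar_cases[of a] R_Dom R_Cod rp_L rp_cod R_Ob by metis

lemma RC2: "M \<in> Ob RR \<Longrightarrow> hom RR (Id RR M) M M"
proof -
  assume "M \<in> Ob RR"
  then have t: "total C L \<eta> M" using R_Ob by blast
  then have r: "rp (M, Id C M)" by (rule rp_id)
  have "L M = M" "M \<in> Ob C" using t unfolding total_def by auto
  then show ?thesis unfolding hom_def R_Id using R_arr[OF r] R_Dom[OF r] R_Cod[OF r] by simp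
qed

lemma RC3: assumes "a \<in> Ar RR" "b \<in> Ar RR" "Cod RR a = Dom RR b"
  shows "hom RR (Comp RR a b) (Dom RR a) (Cod RR b)"
proof -
  obtain U f where a: "rp (U,f)" "a = cl (U,f)" using R_Ar_cases assms(1) by blast
  obtain V g where b: "rp (V,g)" "b = cl (V,g)" using R_Ar_cases assms(2) by blast
  have c: "Cod C f = L V" using assms(3) a b R_Dom R_Cod by simp
  have v: "V \<in> Ob C" using rp_dom b by blast
  obtain W pU pV where gd: "good U f V W pU pV" using good_ex[OF a(1) v c] by blast
  note gp = good_parts[OF gd a(1) v]
  have r: "rp (W, pV \<cdot> g)" by (rule rp_comp[OF gd a(1) b(1)])
  have e: "Comp RR a b = cl (W, pV \<cdot> g)" using R_comp[OF a(1) b(1) c gd] a b by simp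
  show ?thesis unfolding hom_def e using R_arr[OF r] R_Dom[OF r] R_Cod[OF r] R_Dom[OF a(1)] R_Cod[OF b(1)]
      gp rp_dom[OF b(1)] a b by simp
qed

lemma RC4l: assumes "a \<in> Ar RR" shows "Comp RR (Id RR (Dom RR a)) a = a"
proof -
  obtain U f where a: "rp (U,f)" "a = cl (U,f)" using R_Ar_cases assms(1) by blast
  note o = rp_dom[OF a(1)]
  have r: "rp (L U, Id C (L U))" using rp_id rp_L a by blast
  have pb: "is_pullback C (\<eta> U) (Id C (L U)) U (\<eta> U) (Id C U)"
  proof (rule pb_intro)
    fix x y
    assume h: "x \<in> Ar C" "y \<in> Ar C" "Dom C x = Dom C y" "Cod C x = Dom C (Id C (L U))"
      "Cod C y = Dom C (\<eta> U)" "x \<cdot> Id C (L U) = y \<cdot> \<eta> U"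
    then have "y \<cdot> \<eta> U = x" using o by simp
    then show "\<exists>u. u \<in> Ar C \<and> Dom C u = Dom C x \<and> Cod C u = U \<and> u \<cdot> \<eta> U = x \<and> u \<cdot> Id C U = y"
      using h o by (intro exI[of _ y]) auto
  qed (use o in auto)
  have gd: "good (L U) (Id C (L U)) U U (\<eta> U) (Id C U)"
    unfolding good_def using pb o by simp
  have "Comp RR (Id RR (Dom RR a)) a = cl (U, Id C U \<cdot> f)"
    unfolding R_Id R_Dom[OF a(1)] a(2) by (rule R_comp[OF r a(1) _ gd]) (use o in simp)
  then show ?thesis using o a by simp
qed

lemma RC4r: assumes "a \<in> Ar RR" shows "Comp RR a (Id RR (Cod RR a)) = a"
proof -
  obtain U f where a: "rp (U,f)" "a = cl (U,f)" using R_Ar_cases assms(1) by blast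
  note o = rp_dom[OF a(1)]
  have t: "total C L \<eta> (Cod C f)" using rp_cod a by blast
  then have tt: "Cod C f \<in> Ob C" "L (Cod C f) = Cod C f" "\<eta> (Cod C f) = Id C (Cod C f)" unfolding total_def by auto
  have r: "rp (Cod C f, Id C (Cod C f))" using rp_id t by blast
  have pb: "is_pullback C (\<eta> (Cod C f)) f U (Id C U) f"
  proof (rule pb_intro)
    fix x y
    assume h: "x \<in> Ar C" "y \<in> Ar C" "Dom C x = Dom C y" "Cod C x = Dom C f"
      "Cod C y = Dom C (\<eta> (Cod C f))" "x \<cdot> f = y \<cdot> \<eta> (Cod C f)"
    then have "x \<cdot> f = y" using o tt by simp
    then show "\<exists>u. u \<in> Ar C \<and> Dom C u = Dom C x \<and> Cod C u = U \<and> u \<cdot> Id C U = x \<and> u \<cdot> f = y"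
      using h o by (intro exI[of _ x]) auto
  qed (use o tt in auto)
  have gd: "good U f (Cod C f) U (Id C U) f"
    unfolding good_def using pb o by simp
  have "Comp RR a (Id RR (Cod RR a)) = cl (U, f \<cdot> Id C (Cod C f))"
    unfolding R_Id R_Cod[OF a(1)] a(2) by (rule R_comp[OF a(1) r _ gd]) (use tt in simp)
  then show ?thesis using o a by simp
qed

end

context lcat begin

lemma RC5: assumes "a \<in> Ar RR" "b \<in> Ar RR" "c \<in> Ar RR" "Cod RR a = Dom RR b" "Cod RR b = Dom RR c"
  shows "Comp RR (Comp RR a b) c = Comp RR a (Comp RR b c)"
proof -
  obtain U f where a: "rp (U,f)" "a = cl (U,f)" using R_Ar_cases assms(1) by blast
  obtain V g where b: "rp (V,g)" "b = cl (V,g)" using R_Ar_cases assms(2) by blast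
  obtain X h where c: "rp (X,h)" "c = cl (X,h)" using R_Ar_cases assms(3) by blast
  note oa = rp_dom[OF a(1)] and ob = rp_dom[OF b(1)] and oc = rp_dom[OF c(1)]
  have c1: "Cod C f = L V" using assms(4) a b R_Dom R_Cod by simp
  have c2: "Cod C g = L X" using assms(5) b c R_Dom R_Cod by simp
  obtain W pU pV where gW: "good U f V W pU pV" using good_ex[OF a(1) _ c1] ob by blast
  obtain Z zV zX where gZ: "good V g X Z zV zX" using good_ex[OF b(1) _ c2] oc by blast
  note pW = good_parts[OF gW a(1)] and pZ = good_parts[OF gZ b(1)]
  have pbW: "is_pullback C (\<eta> V) f W pU pV" using gW unfolding good_def by blast
  have pbZ: "is_pullback C (\<eta> X) g Z zV zX" using gZ unfolding good_def by blast
  have Z: "Z \<in> Ob C" "zV \<in> Ar C" "Dom C zV = Z" "Cod C zV = V" "zX \<in> Ar C" "Dom C zX = Z" "Cod C zX = X"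
    "zV \<cdot> g = zX \<cdot> \<eta> X" "L Z = L V" "zV \<cdot> \<eta> V = \<eta> Z" using pZ oc by auto
  have W: "W \<in> Ob C" "pU \<in> Ar C" "Dom C pU = W" "Cod C pU = U" "pV \<in> Ar C" "Dom C pV = W" "Cod C pV = V"
    "pU \<cdot> f = pV \<cdot> \<eta> V" "L W = L U" "pU \<cdot> \<eta> U = \<eta> W" using pW ob by auto
  have c3: "Cod C f = L Z" using c1 Z by simp
  obtain T tU tZ where gT: "good U f Z T tU tZ" using good_ex[OF a(1) Z(1) c3] by blast
  have pbT: "is_pullback C (\<eta> Z) f T tU tZ" using gT unfolding good_def by blast
  note pT = good_parts[OF gT a(1) Z(1)]
  have T: "T \<in> Ob C" "tU \<in> Ar C" "Dom C tU = T" "Cod C tU = U" "tZ \<in> Ar C" "Dom C tZ = T" "Cod C tZ = Z"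
    "tU \<cdot> f = tZ \<cdot> \<eta> Z" "L T = L U" "tU \<cdot> \<eta> U = \<eta> T" using pT by auto
  have rZ: "rp (Z, zX \<cdot> h)" by (rule rp_comp[OF gZ b(1) c(1)])
  have rW: "rp (W, pV \<cdot> g)" by (rule rp_comp[OF gW a(1) b(1)])
  have bc: "Comp RR b c = cl (Z, zX \<cdot> h)" using R_comp[OF b(1) c(1) c2 gZ] b c by simp
  have ab: "Comp RR a b = cl (W, pV \<cdot> g)" using R_comp[OF a(1) b(1) c1 gW] a b by simp
  have a_bc: "Comp RR a (Comp RR b c) = cl (T, tZ \<cdot> (zX \<cdot> h))"
    using R_comp[OF a(1) rZ c3 gT] a bc by simp
  have sqk: "tU \<cdot> f = (tZ \<cdot> zV) \<cdot> \<eta> V"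
  proof -
    have "(tZ \<cdot> zV) \<cdot> \<eta> V = tZ \<cdot> (zV \<cdot> \<eta> V)" using T Z ob by simp
    also have "\<dots> = tZ \<cdot> \<eta> Z" using Z by simp
    finally show ?thesis using T by simp
  qed
  obtain k where k: "k \<in> Ar C" "Dom C k = T" "Cod C k = W" "k \<cdot> pU = tU" "k \<cdot> pV = tZ \<cdot> zV"
    using pb_ex[OF pbW, of tU "tZ \<cdot> zV"] T Z oa ob sqk by auto
  have ar: "f \<in> Ar C" "g \<in> Ar C" "\<eta> V \<in> Ar C" "\<eta> X \<in> Ar C" "\<eta> Z \<in> Ar C" "\<eta> U \<in> Ar C"
    using oa ob oc Z by auto
  have pb: "is_pullback C (\<eta> X) (pV \<cdot> g) T k (tZ \<cdot> zX)"
  proof (rule pb_intro)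
    have "k \<cdot> (pV \<cdot> g) = (k \<cdot> pV) \<cdot> g" by (rule asc) (use k W ob in auto)
    also have "\<dots> = tZ \<cdot> (zV \<cdot> g)" using k T Z ob by simp
    also have "\<dots> = (tZ \<cdot> zX) \<cdot> \<eta> X" using T Z oc by simp
    finally show "k \<cdot> (pV \<cdot> g) = (tZ \<cdot> zX) \<cdot> \<eta> X" .
  next
    fix x y
    assume h: "x \<in> Ar C" "y \<in> Ar C" "Dom C x = Dom C y" "Cod C x = Dom C (pV \<cdot> g)"
      "Cod C y = Dom C (\<eta> X)" "x \<cdot> (pV \<cdot> g) = y \<cdot> \<eta> X"
    have cx: "Cod C x = W" "Cod C y = X" using h W ob oc by auto
    have s1: "(x \<cdot> pV) \<cdot> g = y \<cdot> \<eta> X" using h cx W ob by simp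
    obtain z where z: "z \<in> Ar C" "Dom C z = Dom C x" "Cod C z = Z" "z \<cdot> zV = x \<cdot> pV" "z \<cdot> zX = y"
      using pb_ex[OF pbZ, of "x \<cdot> pV" y] h cx W ob oc s1 by auto
    have s2: "(x \<cdot> pU) \<cdot> f = z \<cdot> \<eta> Z"
    proof -
      have "(x \<cdot> pU) \<cdot> f = x \<cdot> (pU \<cdot> f)" using h cx W oa by simp
      also have "\<dots> = x \<cdot> (pV \<cdot> \<eta> V)" using W by simp
      also have "\<dots> = (x \<cdot> pV) \<cdot> \<eta> V" by (rule asc) (use h cx W ob in auto)
      also have "\<dots> = (z \<cdot> zV) \<cdot> \<eta> V" using z by simp
      also have "\<dots> = z \<cdot> (zV \<cdot> \<eta> V)" by (rule assoc) (use z Z ob in auto)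
      also have "\<dots> = z \<cdot> \<eta> Z" using Z by simp
      finally show ?thesis .
    qed
    obtain t where t: "t \<in> Ar C" "Dom C t = Dom C x" "Cod C t = T" "t \<cdot> tU = x \<cdot> pU" "t \<cdot> tZ = z"
      using pb_ex[OF pbT, of "x \<cdot> pU" z] h cx W z Z oa s2 by auto
    have tk: "t \<cdot> k = x"
    proof (rule pb_uniq[OF pbW ar(1) ar(3)])
      have "(t \<cdot> k) \<cdot> pU = t \<cdot> (k \<cdot> pU)" by (rule assoc) (use t k W in auto)
      also have "\<dots> = x \<cdot> pU" using k t by simp
      finally show "(t \<cdot> k) \<cdot> pU = x \<cdot> pU" .
      have "(t \<cdot> k) \<cdot> pV = t \<cdot> (k \<cdot> pV)" by (rule assoc) (use t k W in auto)
      also have "\<dots> = t \<cdot> (tZ \<cdot> zV)" using k by simp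
      also have "\<dots> = (t \<cdot> tZ) \<cdot> zV" by (rule asc) (use t T Z in auto)
      also have "\<dots> = x \<cdot> pV" using t z by simp
      finally show "(t \<cdot> k) \<cdot> pV = x \<cdot> pV" .
    qed (use t k h cx in auto)
    have ty: "t \<cdot> (tZ \<cdot> zX) = y"
    proof -
      have "t \<cdot> (tZ \<cdot> zX) = (t \<cdot> tZ) \<cdot> zX" by (rule asc) (use t T Z in auto)
      also have "\<dots> = y" using t z by simp
      finally show ?thesis .
    qed
    show "\<exists>u. u \<in> Ar C \<and> Dom C u = Dom C x \<and> Cod C u = T \<and> u \<cdot> k = x \<and> u \<cdot> (tZ \<cdot> zX) = y"
      using t tk ty by blast
  next
    fix u v
    assume h: "u \<in> Ar C" "v \<in> Ar C" "Dom C u = Dom C v" "Cod C u = T" "Cod C v = T"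
      "u \<cdot> k = v \<cdot> k" "u \<cdot> (tZ \<cdot> zX) = v \<cdot> (tZ \<cdot> zX)"
    have e1: "u \<cdot> tU = v \<cdot> tU"
    proof -
      have "u \<cdot> tU = (u \<cdot> k) \<cdot> pU" using h(1,4) k W by simp
      also have "\<dots> = (v \<cdot> k) \<cdot> pU" using h(6) by simp
      also have "\<dots> = v \<cdot> tU" using h(2,5) k W by simp
      finally show ?thesis .
    qed
    have e2: "u \<cdot> tZ = v \<cdot> tZ"
    proof (rule pb_uniq[OF pbZ ar(2) ar(4)])
      have "(u \<cdot> tZ) \<cdot> zV = (u \<cdot> k) \<cdot> pV" using h(1,4) k W T Z by simp
      also have "\<dots> = (v \<cdot> k) \<cdot> pV" using h(6) by simp
      also have "\<dots> = (v \<cdot> tZ) \<cdot> zV" using h(2,5) k W T Z by simp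
      finally show "(u \<cdot> tZ) \<cdot> zV = (v \<cdot> tZ) \<cdot> zV" .
      have "(u \<cdot> tZ) \<cdot> zX = u \<cdot> (tZ \<cdot> zX)" using h(1,4) T Z by simp
      also have "\<dots> = v \<cdot> (tZ \<cdot> zX)" using h(7) by simp
      also have "\<dots> = (v \<cdot> tZ) \<cdot> zX" using h(2,5) T Z by simp
      finally show "(u \<cdot> tZ) \<cdot> zX = (v \<cdot> tZ) \<cdot> zX" .
    qed (use h T in auto)
    show "u = v" by (rule pb_uniq[OF pbT ar(1) ar(5)]) (use h T e1 e2 in auto)
  qed (use k T Z W ob oc in auto)
  have gd: "good W (pV \<cdot> g) X T k (tZ \<cdot> zX)"
  proof -
    have "k \<cdot> \<eta> W = k \<cdot> (pU \<cdot> \<eta> U)" using W by simp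
    also have "\<dots> = (k \<cdot> pU) \<cdot> \<eta> U" by (rule asc) (use k W oa in auto)
    also have "\<dots> = \<eta> T" using k T by simp
    finally show ?thesis unfolding good_def using pb T W by simp
  qed
  have ab_c: "Comp RR (Comp RR a b) c = cl (T, (tZ \<cdot> zX) \<cdot> h)"
    using R_comp[OF rW c(1) _ gd] ab c W ob c2 by simp
  show ?thesis using ab_c a_bc T Z oc by simp
qed

end

context lcat begin

abbreviation rs where "rs \<equiv> R_rst C L \<eta>"

lemma RS0: assumes "a \<in> Ar RR" shows "hom RR (rs a) (Dom RR a) (Dom RR a)"
proof -
  obtain U f where a: "rp (U,f)" "a = cl (U,f)" using R_Ar_cases assms(1) by blast
  note o = rp_dom[OF a(1)]
  have r: "rp (U, \<eta> U)" using rp_eta o by blast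
  show ?thesis unfolding hom_def a(2) R_rst[OF a(1)] using R_arr[OF r] R_Dom[OF r] R_Cod[OF r] R_Dom[OF a(1)] o
    by simp
qed

lemma RS1: assumes "a \<in> Ar RR" shows "Comp RR (rs a) a = a"
proof -
  obtain U f where a: "rp (U,f)" "a = cl (U,f)" using R_Ar_cases assms(1) by blast
  note o = rp_dom[OF a(1)]
  have r: "rp (U, \<eta> U)" using rp_eta o by blast
  have pb: "is_pullback C (\<eta> U) (\<eta> U) U (Id C U) (Id C U)"
  proof (rule pb_intro)
    fix x y
    assume h: "x \<in> Ar C" "y \<in> Ar C" "Dom C x = Dom C y" "Cod C x = Dom C (\<eta> U)"
      "Cod C y = Dom C (\<eta> U)" "x \<cdot> \<eta> U = y \<cdot> \<eta> U"
    then have "x = y" using eta_monic[of U x y] o by simp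
    then show "\<exists>u. u \<in> Ar C \<and> Dom C u = Dom C x \<and> Cod C u = U \<and> u \<cdot> Id C U = x \<and> u \<cdot> Id C U = y"
      using h o by (intro exI[of _ x]) auto
  qed (use o in auto)
  have gd: "good U (\<eta> U) U U (Id C U) (Id C U)" unfolding good_def using pb o by simp
  have "Comp RR (rs a) a = cl (U, Id C U \<cdot> f)"
    unfolding a(2) R_rst[OF a(1)] by (rule R_comp[OF r a(1) _ gd]) (use o in simp)
  then show ?thesis using o a by simp
qed

lemma RS2: assumes "a \<in> Ar RR" "b \<in> Ar RR" "Dom RR a = Dom RR b"
  shows "Comp RR (rs a) (rs b) = Comp RR (rs b) (rs a)"
proof -
  obtain U f where a: "rp (U,f)" "a = cl (U,f)" using R_Ar_cases assms(1) by blast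
  obtain V g where b: "rp (V,g)" "b = cl (V,g)" using R_Ar_cases assms(2) by blast
  note oa = rp_dom[OF a(1)] and ob = rp_dom[OF b(1)]
  have LUV: "L U = L V" using assms(3) a b R_Dom by simp
  have ra: "rp (U, \<eta> U)" and rb: "rp (V, \<eta> V)" using rp_eta oa ob by auto
  have vo: "V \<in> Ob C" and cU: "Cod C (\<eta> U) = L V" using ob oa LUV by auto
  obtain W pU pV where g1: "good U (\<eta> U) V W pU pV" using good_ex[OF ra vo cU] by blast
  note p1 = good_parts[OF g1 ra] 
  have pb: "is_pullback C (\<eta> V) (\<eta> U) W pU pV" using g1 unfolding good_def by blast
  have sq: "pU \<cdot> \<eta> U = pV \<cdot> \<eta> V" using p1 ob by auto
  have g2: "good V (\<eta> V) U W pV pU" unfolding good_def using pb_sym[OF pb] p1 ob LUV sq by auto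
  have "Comp RR (rs a) (rs b) = cl (W, pV \<cdot> \<eta> V)"
    unfolding a(2) b(2) R_rst[OF a(1)] R_rst[OF b(1)] by (rule R_comp[OF ra rb _ g1]) (use oa LUV in simp)
  moreover have "Comp RR (rs b) (rs a) = cl (W, pU \<cdot> \<eta> U)"
    unfolding a(2) b(2) R_rst[OF a(1)] R_rst[OF b(1)] by (rule R_comp[OF rb ra _ g2]) (use ob LUV in simp)
  ultimately show ?thesis using sq by simp
qed

lemma RS3: assumes "a \<in> Ar RR" "b \<in> Ar RR" "Dom RR a = Dom RR b"
  shows "Comp RR (rs b) (rs a) = rs (Comp RR (rs b) a)"
proof -
  obtain U f where a: "rp (U,f)" "a = cl (U,f)" using R_Ar_cases assms(1) by blast
  obtain V g where b: "rp (V,g)" "b = cl (V,g)" using R_Ar_cases assms(2) by blast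
  note oa = rp_dom[OF a(1)] and ob = rp_dom[OF b(1)]
  have LUV: "L U = L V" using assms(3) a b R_Dom by simp
  have ra: "rp (U, \<eta> U)" and rb: "rp (V, \<eta> V)" using rp_eta oa ob by auto
  have uo: "U \<in> Ob C" and cV: "Cod C (\<eta> V) = L U" using ob oa LUV by auto
  obtain W pV pU where g1: "good V (\<eta> V) U W pV pU" using good_ex[OF rb uo cV] by blast
  note p1 = good_parts[OF g1 rb]
  have sq: "pU \<cdot> \<eta> U = \<eta> W" using p1 oa by auto
  have rW: "rp (W, pU \<cdot> f)" by (rule rp_comp[OF g1 rb a(1)])
  have "Comp RR (rs b) (rs a) = cl (W, pU \<cdot> \<eta> U)"
    unfolding a(2) b(2) R_rst[OF a(1)] R_rst[OF b(1)] by (rule R_comp[OF rb ra _ g1]) (use ob LUV in simp)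
  moreover have "Comp RR (rs b) a = cl (W, pU \<cdot> f)"
    unfolding a(2) b(2) R_rst[OF b(1)] by (rule R_comp[OF rb a(1) _ g1]) (use ob LUV in simp)
  ultimately show ?thesis using sq R_rst[OF rW] by simp
qed

lemma RS4: assumes "a \<in> Ar RR" "b \<in> Ar RR" "Cod RR a = Dom RR b"
  shows "Comp RR a (rs b) = Comp RR (rs (Comp RR a b)) a"
proof -
  obtain U f where a: "rp (U,f)" "a = cl (U,f)" using R_Ar_cases assms(1) by blast
  obtain V g where b: "rp (V,g)" "b = cl (V,g)" using R_Ar_cases assms(2) by blast
  note oa = rp_dom[OF a(1)] and ob = rp_dom[OF b(1)]
  have c: "Cod C f = L V" using assms(3) a b R_Dom R_Cod by simp
  have rb: "rp (V, \<eta> V)" using rp_eta ob by auto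
  obtain W pU pV where g1: "good U f V W pU pV" using good_ex[OF a(1) _ c] ob by auto
  note p1 = good_parts[OF g1 a(1)]
  have W: "W \<in> Ob C" "pU \<in> Ar C" "Dom C pU = W" "Cod C pU = U" "pV \<in> Ar C" "Dom C pV = W" "Cod C pV = V"
    "pU \<cdot> f = pV \<cdot> \<eta> V" "L W = L U" "pU \<cdot> \<eta> U = \<eta> W" using p1 ob by auto
  have rW: "rp (W, pV \<cdot> g)" by (rule rp_comp[OF g1 a(1) b(1)])
  have rWe: "rp (W, \<eta> W)" using rp_eta W by auto
  have lhs: "Comp RR a (rs b) = cl (W, pV \<cdot> \<eta> V)"
    unfolding a(2) b(2) R_rst[OF b(1)] by (rule R_comp[OF a(1) rb c g1])
  have ab: "Comp RR a b = cl (W, pV \<cdot> g)"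
    unfolding a(2) b(2) by (rule R_comp[OF a(1) b(1) c g1])
  have pb: "is_pullback C (\<eta> U) (\<eta> W) W (Id C W) pU"
  proof (rule pb_intro)
    fix x y
    assume h: "x \<in> Ar C" "y \<in> Ar C" "Dom C x = Dom C y" "Cod C x = Dom C (\<eta> W)"
      "Cod C y = Dom C (\<eta> U)" "x \<cdot> \<eta> W = y \<cdot> \<eta> U"
    have cx: "Cod C x = W" "Cod C y = U" using h W oa by auto
    have "(x \<cdot> pU) \<cdot> \<eta> U = x \<cdot> (pU \<cdot> \<eta> U)" by (rule assoc) (use h cx W oa in auto)
    also have "\<dots> = y \<cdot> \<eta> U" using W h by simp
    finally have "x \<cdot> pU = y" using eta_monic[of U "x \<cdot> pU" y] h cx W oa by simp
    then show "\<exists>u. u \<in> Ar C \<and> Dom C u = Dom C x \<and> Cod C u = W \<and> u \<cdot> Id C W = x \<and> u \<cdot> pU = y"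
      using h cx W by (intro exI[of _ x]) auto
  qed (use W oa in auto)
  have g2: "good W (\<eta> W) U W (Id C W) pU" unfolding good_def using pb W by simp
  have "Comp RR (rs (Comp RR a b)) a = cl (W, pU \<cdot> f)"
    unfolding ab R_rst[OF rW] unfolding a(2) by (rule R_comp[OF rWe a(1) _ g2]) (use W in simp)
  then show ?thesis using lhs W by simp
qed

end

theorem proposition4p5:
  fixes C :: "('o, 'm) cat" and L :: "'o \<Rightarrow> 'o" and \<eta> :: "'o \<Rightarrow> 'm"
  assumes "local_category C L \<eta>"
  shows "restriction_category (R_cat C L \<eta>) (R_rst C L \<eta>)"
proof -
  interpret lcat C L \<eta> by (rule lcat.intro[OF assms])
  have cat: "category RR"
    unfolding category_def
  proof (intro conjI ballI impI)
    fix f assume "f \<in> Ar RR" then show "Dom RR f \<in> Ob RR" using RC1 by blast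
  next
    fix f assume "f \<in> Ar RR" then show "Cod RR f \<in> Ob RR" using RC1 by blast
  next
    fix A assume "A \<in> Ob RR" then show "hom RR (Id RR A) A A" by (rule RC2)
  next
    fix f g assume "f \<in> Ar RR" "g \<in> Ar RR" "Cod RR f = Dom RR g"
    then show "hom RR (Comp RR f g) (Dom RR f) (Cod RR g)" by (rule RC3)
  next
    fix f assume "f \<in> Ar RR" then show "Comp RR (Id RR (Dom RR f)) f = f" by (rule RC4l)
  next
    fix f assume "f \<in> Ar RR" then show "Comp RR f (Id RR (Cod RR f)) = f" by (rule RC4r)
  next
    fix f g h assume "f \<in> Ar RR" "g \<in> Ar RR" "h \<in> Ar RR" "Cod RR f = Dom RR g" "Cod RR g = Dom RR h"
    then show "Comp RR (Comp RR f g) h = Comp RR f (Comp RR g h)" by (rule RC5)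
  qed
  show ?thesis unfolding restriction_category_def
  proof (intro conjI ballI impI)
    show "category RR" by (rule cat)
  next
    fix f assume "f \<in> Ar RR" then show "hom RR (rs f) (Dom RR f) (Dom RR f)" by (rule RS0)
  next
    fix f assume "f \<in> Ar RR" then show "Comp RR (rs f) f = f" by (rule RS1)
  next
    fix f g assume "f \<in> Ar RR" "g \<in> Ar RR" "Dom RR f = Dom RR g"
    then show "Comp RR (rs f) (rs g) = Comp RR (rs g) (rs f)" by (rule RS2)
  next
    fix f g assume "f \<in> Ar RR" "g \<in> Ar RR" "Dom RR f = Dom RR g"
    then show "Comp RR (rs g) (rs f) = rs (Comp RR (rs g) f)" by (rule RS3)
  next
    fix f g assume "f \<in> Ar RR" "g \<in> Ar RR" "Cod RR f = Dom RR g"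
    then show "Comp RR f (rs g) = Comp RR (rs (Comp RR f g)) f" by (rule RS4)
  qed
qed


end
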